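(* Let $F$ be a clause-set and $v$ a singular variable for $F$, with singular literal $x$, main clause $C$ and side clauses $D_1,\dots,D_m$. Let $C' := C\setminus\{x\}$ and $D_i' := D_i\setminus\{\overline{x}\}$. Then the following are equivalent: 1. $F$ is saturated minimally unsatisfiable. 2. All of the following hold: (a) $\mathrm{DP}_v(F)$ is saturated minimally unsatisfiable; (b) $C' = \bigcap_{i=1}^m D_i'$; (c) for every $E\in F$ with $v\notin\mathrm{var}(E)$ we have $C'\not\subseteq E$.
   Context: Literals are variables $v$ and complements $\overline{v}$; a clause is a finite set of literals with no complementary pair; a clause-set is a finite set of clauses; $\mathrm{var}(F)$ is the set of variables of $F$; $\mathrm{ldeg}_F(x)$ is the number of clauses of $F$ containing literal $x$. $\mathrm{DP}_v(F) := \{C \in F : v \notin \mathrm{var}(C)\} \cup \{(C \cup D)\setminus\{v,\overline{v}\} : C, D \in F,\ C \cap \overline{D} = \{v\}\}$. A clause-set is minimally unsatisfiable if it is unsatisfiable and each proper subset is satisfiable; a minimally unsatisfiable $F$ is saturated if for every $C \in F$ and every literal $y$ with $\mathrm{var}(y) \in \mathrm{var}(F)\setminus \mathrm{var}(C)$, the clause-set $(F\setminus\{C\})\cup\{C\cup\{y\}\}$ is satisfiable. A variable $v$ is singular for $F$ if $\min(\mathrm{ldeg}_F(v),\mathrm{ldeg}_F(\overline{v}))=1$; a singular literal for $v$ is a literal $x$ with $\mathrm{var}(x)=v$ and $\mathrm{ldeg}_F(x)=1$ (one chosen if both polarities qualify); the main clause is the clause containing $x$, the side clauses are the clauses containing $\overline{x}$.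 *)

theory Defs
  imports Main
begin

datatype 'v lit = Pos 'v | Neg 'v

fun var_lit :: "'v lit \<Rightarrow> 'v" where
  "var_lit (Pos v) = v" | "var_lit (Neg v) = v"

fun comp :: "'v lit \<Rightarrow> 'v lit" where
  "comp (Pos v) = Neg v" | "comp (Neg v) = Pos v"

type_synonym 'v clause = "'v lit set"
type_synonym 'v cls = "'v clause set"

definition comp_clause :: "'v clause \<Rightarrow> 'v clause" where
  "comp_clause C = comp ` C"

definition is_clause :: "'v clause \<Rightarrow> bool" where
  "is_clause C \<longleftrightarrow> finite C \<and> (\<forall>l\<in>C. comp l \<notin> C)"

definition is_clause_set :: "'v cls \<Rightarrow> bool" where
  "is_clause_set F \<longleftrightarrow> finite F \<and> (\<forall>C\<in>F. is_clause C)"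

definition var_clause :: "'v clause \<Rightarrow> 'v set" where
  "var_clause C = var_lit ` C"

definition var_cls :: "'v cls \<Rightarrow> 'v set" where
  "var_cls F = (\<Union>C\<in>F. var_clause C)"

definition ldeg :: "'v cls \<Rightarrow> 'v lit \<Rightarrow> nat" where
  "ldeg F x = card {C \<in> F. x \<in> C}"

definition DP :: "'v \<Rightarrow> 'v cls \<Rightarrow> 'v cls" where
  "DP v F = {C \<in> F. v \<notin> var_clause C}
     \<union> {(C \<union> D) - {Pos v, Neg v} | C D. C \<in> F \<and> D \<in> F \<and> C \<inter> comp_clause D = {Pos v}}"

fun lit_true :: "('v \<Rightarrow> bool) \<Rightarrow> 'v lit \<Rightarrow> bool" where
  "lit_true \<phi> (Pos v) = \<phi> v" | "lit_true \<phi> (Neg v) = (\<not> \<phi> v)"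

definition satisfiable :: "'v cls \<Rightarrow> bool" where
  "satisfiable F \<longleftrightarrow> (\<exists>\<phi>. \<forall>C\<in>F. \<exists>l\<in>C. lit_true \<phi> l)"

definition min_unsat :: "'v cls \<Rightarrow> bool" where
  "min_unsat F \<longleftrightarrow> \<not> satisfiable F \<and> (\<forall>G. G \<subset> F \<longrightarrow> satisfiable G)"

definition saturated_min_unsat :: "'v cls \<Rightarrow> bool" where
  "saturated_min_unsat F \<longleftrightarrow> min_unsat F \<and>
     (\<forall>C\<in>F. \<forall>y. var_lit y \<in> var_cls F - var_clause C \<longrightarrow>
        satisfiable ((F - {C}) \<union> {C \<union> {y}}))"

definition singular :: "'v cls \<Rightarrow> 'v \<Rightarrow> bool" where
  "singular F v \<longleftrightarrow> min (ldeg F (Pos v)) (ldeg F (Neg v)) = 1"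

end

theory Submission
  imports Defs
begin

definition sat_cl :: "('v \<Rightarrow> bool) \<Rightarrow> 'v clause \<Rightarrow> bool" where
  "sat_cl \<phi> E \<longleftrightarrow> (\<exists>l\<in>E. lit_true \<phi> l)"

definition wit :: "'v cls \<Rightarrow> 'v clause \<Rightarrow> ('v \<Rightarrow> bool) \<Rightarrow> bool" where
  "wit F E \<phi> \<longleftrightarrow> \<not> sat_cl \<phi> E \<and> (\<forall>D\<in>F. D \<noteq> E \<longrightarrow> sat_cl \<phi> D)"

definition mk :: "('v \<Rightarrow> bool) \<Rightarrow> 'v lit \<Rightarrow> ('v \<Rightarrow> bool)" where
  "mk \<phi> l = \<phi>(var_lit l := (case l of Pos _ \<Rightarrow> True | Neg _ \<Rightarrow> False))"

lemma lit_true_comp[simp]: "lit_true \<phi> (comp l) = (\<not> lit_true \<phi> l)"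
  by (cases l) auto
lemma var_comp[simp]: "var_lit (comp l) = var_lit l"
  by (cases l) auto
lemma comp_comp[simp]: "comp (comp l) = l"
  by (cases l) auto
lemma comp_neq[simp]: "comp l \<noteq> l"
  by (cases l) auto
lemma mk_true[simp]: "lit_true (mk \<phi> l) l"
  by (cases l) (auto simp: mk_def)
lemma mk_other: "var_lit m \<noteq> var_lit l \<Longrightarrow> lit_true (mk \<phi> l) m = lit_true \<phi> m"
  by (cases l; cases m) (auto simp: mk_def)
lemma var_eq: "var_lit m = var_lit l \<Longrightarrow> m = l \<or> m = comp l"
  by (cases l; cases m) auto
lemma sat_mk: "var_lit l \<notin> var_clause E \<Longrightarrow> sat_cl (mk \<phi> l) E = sat_cl \<phi> E"
  unfolding sat_cl_def var_clause_def using mk_other by (metis image_eqI)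

lemma satisfiable_alt: "satisfiable F \<longleftrightarrow> (\<exists>\<phi>. \<forall>E\<in>F. sat_cl \<phi> E)"
  by (simp add: satisfiable_def sat_cl_def)

lemma sat_intro: "\<forall>E\<in>F. sat_cl \<phi> E \<Longrightarrow> satisfiable F"
  unfolding satisfiable_alt by (rule exI)

lemma MU_char: "min_unsat F \<longleftrightarrow> \<not> satisfiable F \<and> (\<forall>E\<in>F. \<exists>\<phi>. wit F E \<phi>)"
proof
  assume a: "min_unsat F"
  show "\<not> satisfiable F \<and> (\<forall>E\<in>F. \<exists>\<phi>. wit F E \<phi>)"
  proof (intro conjI ballI)
    show "\<not> satisfiable F" using a by (simp add: min_unsat_def)
    fix E assume E: "E \<in> F"
    then have "F - {E} \<subset> F" by auto
    then have "satisfiable (F - {E})" using a unfolding min_unsat_def by blast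
    then obtain \<phi> where p: "\<forall>D\<in>F - {E}. sat_cl \<phi> D"
      unfolding satisfiable_alt by blast
    have u: "\<not> satisfiable F" using a by (simp add: min_unsat_def)
    have "\<not> sat_cl \<phi> E"
    proof
      assume "sat_cl \<phi> E"
      then have "\<forall>D\<in>F. sat_cl \<phi> D" using p by blast
      then show False using u sat_intro by metis
    qed
    then have "wit F E \<phi>" using p by (simp add: wit_def)
    then show "\<exists>\<phi>. wit F E \<phi>" by (rule exI[where x=\<phi>])
  qed
next
  assume a: "\<not> satisfiable F \<and> (\<forall>E\<in>F. \<exists>\<phi>. wit F E \<phi>)"
  show "min_unsat F" unfolding min_unsat_def
  proof (intro conjI allI impI)
    show "\<not> satisfiable F" using a by simp
    fix G assume "G \<subset> F"
    then obtain E where E: "E \<in> F" "E \<notin> G" by auto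
    have "\<exists>\<phi>. wit F E \<phi>" using a E(1) by blast
    then obtain \<phi> where "wit F E \<phi>" by (elim exE)
    then have w: "\<forall>D\<in>F. D \<noteq> E \<longrightarrow> sat_cl \<phi> D" unfolding wit_def by (rule conjunct2)
    have sub: "G \<subseteq> F" using \<open>G \<subset> F\<close> by (rule psubset_imp_subset)
    have "\<forall>D\<in>G. sat_cl \<phi> D"
    proof
      fix D assume "D \<in> G"
      then have "D \<in> F" "D \<noteq> E" using sub E(2) by auto
      then show "sat_cl \<phi> D" using w by simp
    qed
    then show "satisfiable G" by (rule sat_intro)
  qed
qed

lemma ext_sat1:
  assumes u: "\<not> satisfiable F" and E: "E \<in> F" and s: "satisfiable ((F - {E}) \<union> {E \<union> {y}})"
  shows "\<exists>\<phi>. wit F E \<phi> \<and> lit_true \<phi> y"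
proof -
  obtain \<phi> where p: "\<forall>D\<in>(F - {E}) \<union> {E \<union> {y}}. sat_cl \<phi> D"
    using s unfolding satisfiable_alt by blast
  have p1: "\<forall>D\<in>F. D \<noteq> E \<longrightarrow> sat_cl \<phi> D" using p by simp
  have p2: "sat_cl \<phi> (E \<union> {y})" using p by simp
  have n: "\<not> sat_cl \<phi> E"
  proof
    assume "sat_cl \<phi> E"
    then have "\<forall>D\<in>F. sat_cl \<phi> D" using p1 by metis
    then show False using u unfolding satisfiable_alt by blast
  qed
  have "lit_true \<phi> y" using n p2 by (auto simp add: sat_cl_def)
  then have "wit F E \<phi> \<and> lit_true \<phi> y" using n p1 unfolding wit_def by simp
  then show ?thesis by (rule exI[where x=\<phi>])
qed

lemma ext_sat2:
  assumes "wit F E \<phi>" "lit_true \<phi> y"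
  shows "satisfiable ((F - {E}) \<union> {E \<union> {y}})"
proof -
  have "\<forall>D\<in>(F - {E}) \<union> {E \<union> {y}}. sat_cl \<phi> D"
    using assms unfolding wit_def sat_cl_def by auto
  then show ?thesis by (rule sat_intro)
qed

lemma SMU_char: "saturated_min_unsat F \<longleftrightarrow> \<not> satisfiable F \<and> (\<forall>E\<in>F. \<exists>\<phi>. wit F E \<phi>)
   \<and> (\<forall>E\<in>F. \<forall>y. var_lit y \<in> var_cls F - var_clause E \<longrightarrow> (\<exists>\<phi>. wit F E \<phi> \<and> lit_true \<phi> y))"
  (is "_ \<longleftrightarrow> ?R")
proof
  assume a: "saturated_min_unsat F"
  then have m: "min_unsat F" by (simp add: saturated_min_unsat_def)
  then have u: "\<not> satisfiable F" by (simp add: min_unsat_def)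
  have w: "\<forall>E\<in>F. \<exists>\<phi>. wit F E \<phi>" using m MU_char by blast
  have s: "\<forall>E\<in>F. \<forall>y. var_lit y \<in> var_cls F - var_clause E \<longrightarrow> (\<exists>\<phi>. wit F E \<phi> \<and> lit_true \<phi> y)"
  proof (intro ballI allI impI)
    fix E y assume E: "E \<in> F" and y: "var_lit y \<in> var_cls F - var_clause E"
    have "satisfiable ((F - {E}) \<union> {E \<union> {y}})" using a E y unfolding saturated_min_unsat_def by blast
    then show "\<exists>\<phi>. wit F E \<phi> \<and> lit_true \<phi> y" using ext_sat1[OF u E] by blast
  qed
  show ?R using u w s by blast
next
  assume a: ?R
  then have u: "\<not> satisfiable F" by blast
  have m: "min_unsat F" using a MU_char by blast
  have s: "\<forall>E\<in>F. \<forall>y. var_lit y \<in> var_cls F - var_clause E \<longrightarrow>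
      satisfiable ((F - {E}) \<union> {E \<union> {y}})"
  proof (intro ballI allI impI)
    fix E y assume E: "E \<in> F" and y: "var_lit y \<in> var_cls F - var_clause E"
    then obtain \<phi> where "wit F E \<phi>" "lit_true \<phi> y" using a by blast
    then show "satisfiable ((F - {E}) \<union> {E \<union> {y}})" by (rule ext_sat2)
  qed
  show "saturated_min_unsat F" unfolding saturated_min_unsat_def using m s by blast
qed


lemma sat_insert[simp]: "sat_cl \<phi> (insert a A) = (lit_true \<phi> a \<or> sat_cl \<phi> A)"
  by (simp add: sat_cl_def)
lemma sat_mono: "A \<subseteq> B \<Longrightarrow> sat_cl \<phi> A \<Longrightarrow> sat_cl \<phi> B"
  unfolding sat_cl_def by blast
lemma sat_member: "a \<in> A \<Longrightarrow> lit_true \<phi> a \<Longrightarrow> sat_cl \<phi> A"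
  unfolding sat_cl_def by blast
lemma unsat_member: "\<not> sat_cl \<phi> A \<Longrightarrow> a \<in> A \<Longrightarrow> \<not> lit_true \<phi> a"
  unfolding sat_cl_def by blast
lemma var_clauseI: "l \<in> E \<Longrightarrow> var_lit l \<in> var_clause E"
  by (simp add: var_clause_def)
lemma var_clauseE: "w \<in> var_clause E \<Longrightarrow> (\<And>l. l \<in> E \<Longrightarrow> w = var_lit l \<Longrightarrow> P) \<Longrightarrow> P"
  unfolding var_clause_def by blast
lemma var_clsI: "E \<in> F \<Longrightarrow> l \<in> E \<Longrightarrow> var_lit l \<in> var_cls F"
  unfolding var_cls_def var_clause_def by blast
lemma var_clsE: "w \<in> var_cls F \<Longrightarrow> (\<And>E l. E \<in> F \<Longrightarrow> l \<in> E \<Longrightarrow> w = var_lit l \<Longrightarrow> P) \<Longrightarrow> P"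
  unfolding var_cls_def var_clause_def by blast
lemma models_unsat: "\<not> satisfiable F \<Longrightarrow> \<forall>E\<in>F. sat_cl \<phi> E \<Longrightarrow> False"
  using sat_intro by blast
lemma witI: "\<not> sat_cl \<phi> E \<Longrightarrow> (\<And>D. D \<in> F \<Longrightarrow> D \<noteq> E \<Longrightarrow> sat_cl \<phi> D) \<Longrightarrow> wit F E \<phi>"
  unfolding wit_def by blast
lemma witD1: "wit F E \<phi> \<Longrightarrow> \<not> sat_cl \<phi> E"
  unfolding wit_def by blast
lemma witD2: "wit F E \<phi> \<Longrightarrow> D \<in> F \<Longrightarrow> D \<noteq> E \<Longrightarrow> sat_cl \<phi> D"
  unfolding wit_def by blast

lemma gen_wit_y2:
  assumes w: "\<forall>E\<in>F. \<exists>\<phi>. wit F E \<phi>"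
    and s: "\<forall>E\<in>F. \<forall>y. var_lit y \<in> var_cls F - var_clause E \<longrightarrow> (\<exists>\<phi>. wit F E \<phi> \<and> lit_true \<phi> y)"
    and E: "E \<in> F" and y: "y \<notin> E" and vy: "var_lit y \<in> var_cls F"
  obtains \<phi> where "wit F E \<phi>" "lit_true \<phi> y"
proof (cases "comp y \<in> E")
  case True
  have "\<exists>\<phi>. wit F E \<phi>" using w E by blast
  then obtain \<phi> where p: "wit F E \<phi>" by (elim exE)
  have "\<not> lit_true \<phi> (comp y)" using unsat_member[OF witD1[OF p] True] .
  then show ?thesis using that p by simp
next
  case False
  have "var_lit y \<notin> var_clause E"
  proof
    assume "var_lit y \<in> var_clause E"
    then obtain l where "l \<in> E" "var_lit y = var_lit l" by (rule var_clauseE) auto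
    then show False using var_eq[of l y] y False by auto
  qed
  then have "\<exists>\<phi>. wit F E \<phi> \<and> lit_true \<phi> y" using s E vy by blast
  then obtain \<phi> where "wit F E \<phi> \<and> lit_true \<phi> y" by (elim exE)
  then show ?thesis using that by blast
qed

locale sing =
  fixes F :: "'v cls" and v :: 'v and x :: "'v lit" and C :: "'v clause"
  assumes cs: "is_clause_set F" and vx: "var_lit x = v" and deg: "ldeg F x = 1"
    and CF: "C \<in> F" and xC: "x \<in> C"
begin

definition S where "S = {D\<in>F. comp x \<in> D}"
definition F0 where "F0 = {E\<in>F. v \<notin> var_clause E}"
abbreviation Dp :: "'v clause \<Rightarrow> 'v clause" where "Dp D \<equiv> D - {comp x}"
abbreviation C' where "C' \<equiv> C - {x}"

lemma uniq: assumes "E \<in> F" "x \<in> E" shows "E = C"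
proof -
  have "card {E\<in>F. x\<in>E} = 1" using deg by (simp add: ldeg_def)
  then obtain a where a: "{E\<in>F. x\<in>E} = {a}" by (rule card_1_singletonE)
  have "E \<in> {E\<in>F. x\<in>E}" "C \<in> {E\<in>F. x\<in>E}" using assms CF xC by simp_all
  then show ?thesis unfolding a by simp
qed

lemma clause: "E \<in> F \<Longrightarrow> l \<in> E \<Longrightarrow> comp l \<notin> E"
  using cs unfolding is_clause_set_def is_clause_def by blast

lemma var_v: assumes "var_lit l = v" shows "l = x \<or> l = comp x"
  using var_eq[of l x] assms vx by simp

lemma var_in: assumes "E \<in> F" "v \<in> var_clause E" shows "x \<in> E \<or> comp x \<in> E"
  using assms(2) by (rule var_clauseE) (use var_v in metis)

lemma split: assumes "E \<in> F" shows "E \<in> F0 \<or> E = C \<or> E \<in> S"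
  using assms var_in uniq unfolding F0_def S_def by blast

lemma C_notS: "comp x \<notin> C" using clause[OF CF xC] .
lemma S_x: "D \<in> S \<Longrightarrow> x \<notin> D" using clause[of _ "comp x"] by (auto simp: S_def)
lemma S_F: "D \<in> S \<Longrightarrow> D \<in> F" by (simp add: S_def)
lemma S_cx: "D \<in> S \<Longrightarrow> comp x \<in> D" by (simp add: S_def)
lemma F0_F: "E \<in> F0 \<Longrightarrow> E \<in> F" by (simp add: F0_def)
lemma F0_v: "E \<in> F0 \<Longrightarrow> v \<notin> var_clause E" by (simp add: F0_def)
lemma S_notF0: "D \<in> S \<Longrightarrow> D \<notin> F0"
  using var_clauseI[of "comp x"] vx by (auto simp: S_def F0_def)
lemma C_notF0: "C \<notin> F0"
  using var_clauseI[OF xC] vx by (auto simp: F0_def)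
lemma C_notS': "C \<notin> S" using C_notS by (auto simp: S_def)

lemma C'_var: "l \<in> C' \<Longrightarrow> var_lit l \<noteq> v"
  using var_v C_notS by blast
lemma Dp_var: "D \<in> S \<Longrightarrow> l \<in> Dp D \<Longrightarrow> var_lit l \<noteq> v"
  using var_v S_x by blast
lemma C'_nv: "v \<notin> var_clause C'"
  using C'_var by (auto simp: var_clause_def)
lemma Dp_nv: "D \<in> S \<Longrightarrow> v \<notin> var_clause (Dp D)"
  using Dp_var by (auto simp: var_clause_def)
lemma Dp_inj: assumes "D1 \<in> S" "D2 \<in> S" "Dp D1 = Dp D2" shows "D1 = D2"
proof -
  have "D1 = insert (comp x) (Dp D1)" "D2 = insert (comp x) (Dp D2)"
    using S_cx assms by auto
  then show ?thesis using assms(3) by simp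
qed

lemma C_eq: "C = insert x C'" using xC by auto
lemma D_eq: "D \<in> S \<Longrightarrow> D = insert (comp x) (Dp D)" using S_cx by auto

lemma satC: "sat_cl \<phi> C \<longleftrightarrow> lit_true \<phi> x \<or> sat_cl \<phi> C'"
proof -
  have "sat_cl \<phi> C = sat_cl \<phi> (insert x C')" using C_eq by (rule arg_cong)
  also have "\<dots> \<longleftrightarrow> lit_true \<phi> x \<or> sat_cl \<phi> C'" by (rule sat_insert)
  finally show ?thesis .
qed
lemma satD: "D \<in> S \<Longrightarrow> sat_cl \<phi> D \<longleftrightarrow> \<not> lit_true \<phi> x \<or> sat_cl \<phi> (Dp D)"
proof -
  assume D: "D \<in> S"
  have "sat_cl \<phi> D = sat_cl \<phi> (insert (comp x) (Dp D))" using D_eq[OF D] by (rule arg_cong)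
  also have "\<dots> \<longleftrightarrow> lit_true \<phi> (comp x) \<or> sat_cl \<phi> (Dp D)" by (rule sat_insert)
  finally show ?thesis by simp
qed

lemma mk_F0: "E \<in> F0 \<Longrightarrow> var_lit l = v \<Longrightarrow> sat_cl (mk \<phi> l) E = sat_cl \<phi> E"
  using sat_mk F0_v by metis
lemma mk_C': "var_lit l = v \<Longrightarrow> sat_cl (mk \<phi> l) C' = sat_cl \<phi> C'"
  using sat_mk C'_nv by metis
lemma mk_Dp: "D \<in> S \<Longrightarrow> var_lit l = v \<Longrightarrow> sat_cl (mk \<phi> l) (Dp D) = sat_cl \<phi> (Dp D)"
  using sat_mk Dp_nv by metis
lemma mk_lit: "var_lit y \<noteq> v \<Longrightarrow> var_lit l = v \<Longrightarrow> lit_true (mk \<phi> l) y = lit_true \<phi> y"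
  using mk_other by metis
lemma mkx_x: "lit_true (mk \<phi> x) x" by simp
lemma mkn_x: "\<not> lit_true (mk \<phi> (comp x)) x"
  using mk_true[of \<phi> "comp x"] by simp

lemma modelsI: assumes "\<And>E. E \<in> F0 \<Longrightarrow> sat_cl \<phi> E" "sat_cl \<phi> C" "\<And>D. D \<in> S \<Longrightarrow> sat_cl \<phi> D"
  shows "\<forall>E\<in>F. sat_cl \<phi> E"
  using assms split by blast

lemma witFI: assumes "E \<in> F" "\<not> sat_cl \<phi> E"
  "\<And>E'. E' \<in> F0 \<Longrightarrow> E' \<noteq> E \<Longrightarrow> sat_cl \<phi> E'" "C \<noteq> E \<Longrightarrow> sat_cl \<phi> C"
  "\<And>D. D \<in> S \<Longrightarrow> D \<noteq> E \<Longrightarrow> sat_cl \<phi> D"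
  shows "wit F E \<phi>"
proof (rule witI[OF assms(2)])
  fix D assume "D \<in> F" "D \<noteq> E"
  then show "sat_cl \<phi> D" using split assms(3-5) by blast
qed


lemma Pv_cases: "x = Pos v \<or> x = Neg v"
  using vx by (cases x) auto

lemma res_mem: assumes "A \<inter> comp_clause B = {Pos v}" shows "Pos v \<in> A" "Neg v \<in> B"
proof -
  have "Pos v \<in> A \<inter> comp_clause B" using assms by simp
  then have "Pos v \<in> A" "Pos v \<in> comp ` B" by (auto simp: comp_clause_def)
  then obtain b where "b \<in> B" "comp b = Pos v" by auto
  moreover then have "b = Neg v" by (cases b) auto
  ultimately show "Pos v \<in> A" "Neg v \<in> B" using \<open>Pos v \<in> A\<close> by auto
qed

lemma noclash: assumes sub: "C' \<subseteq> Dp D" and D: "D \<in> S" and "l \<in> C'" shows "comp l \<notin> D"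
proof -
  have "l \<in> D" using sub assms(3) by blast
  then show ?thesis using clause S_F[OF D] by blast
qed

lemma DP_eq: assumes sub: "\<forall>D\<in>S. C' \<subseteq> Dp D" shows "DP v F = F0 \<union> Dp ` S"
proof -
  let ?R = "{(A \<union> B) - {Pos v, Neg v} | A B. A \<in> F \<and> B \<in> F \<and> A \<inter> comp_clause B = {Pos v}}"
  have R: "?R = Dp ` S"
  proof (cases "x = Pos v")
    case True
    then have cx: "comp x = Neg v" by simp
    show ?thesis
    proof
      show "?R \<subseteq> Dp ` S"
      proof
        fix X assume "X \<in> ?R"
        then obtain A B where X: "X = (A \<union> B) - {Pos v, Neg v}" and AB: "A \<in> F" "B \<in> F"
          "A \<inter> comp_clause B = {Pos v}" by blast
        have m: "Pos v \<in> A" "Neg v \<in> B" using res_mem[OF AB(3)] by auto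
        have A: "A = C" using uniq[OF AB(1)] m(1) True by simp
        have B: "B \<in> S" unfolding S_def using AB(2) m(2) cx by simp
        have "Pos v \<notin> B" using S_x[OF B] True by simp
        moreover have "Neg v \<notin> C" using C_notS cx by simp
        ultimately have "X = C' \<union> Dp B" using X A True cx by auto
        also have "\<dots> = Dp B" using sub B by blast
        finally show "X \<in> Dp ` S" using B by blast
      qed
    next
      show "Dp ` S \<subseteq> ?R"
      proof
        fix X assume "X \<in> Dp ` S"
        then obtain D where D: "D \<in> S" and X: "X = Dp D" by blast
        have int: "C \<inter> comp_clause D = {Pos v}"
        proof
          show "{Pos v} \<subseteq> C \<inter> comp_clause D"
            using xC True S_cx[OF D] cx by (force simp: comp_clause_def)
          show "C \<inter> comp_clause D \<subseteq> {Pos v}"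
          proof
            fix l assume l: "l \<in> C \<inter> comp_clause D"
            then have "comp l \<in> D" by (auto simp: comp_clause_def)
            then have "l \<notin> C'" using noclash[of D l] sub D by blast
            then show "l \<in> {Pos v}" using l True by auto
          qed
        qed
        have "Pos v \<notin> D" using S_x[OF D] True by simp
        moreover have "Neg v \<notin> C" using C_notS cx by simp
        ultimately have "X = (C \<union> D) - {Pos v, Neg v}" using X True cx sub D by auto
        then show "X \<in> ?R" using CF S_F[OF D] int by blast
      qed
    qed
  next
    case False
    then have xN: "x = Neg v" using Pv_cases by simp
    then have cx: "comp x = Pos v" by simp
    show ?thesis
    proof
      show "?R \<subseteq> Dp ` S"
      proof
        fix X assume "X \<in> ?R"
        then obtain A B where X: "X = (A \<union> B) - {Pos v, Neg v}" and AB: "A \<in> F" "B \<in> F"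
          "A \<inter> comp_clause B = {Pos v}" by blast
        have m: "Pos v \<in> A" "Neg v \<in> B" using res_mem[OF AB(3)] by auto
        have B: "B = C" using uniq[OF AB(2)] m(2) xN by simp
        have A: "A \<in> S" unfolding S_def using AB(1) m(1) cx by simp
        have "Neg v \<notin> A" using S_x[OF A] xN by simp
        moreover have "Pos v \<notin> C" using C_notS cx by simp
        ultimately have "X = Dp A \<union> C'" using X B xN cx by auto
        also have "\<dots> = Dp A" using sub A by blast
        finally show "X \<in> Dp ` S" using A by blast
      qed
    next
      show "Dp ` S \<subseteq> ?R"
      proof
        fix X assume "X \<in> Dp ` S"
        then obtain D where D: "D \<in> S" and X: "X = Dp D" by blast
        have int: "D \<inter> comp_clause C = {Pos v}"
        proof
          show "{Pos v} \<subseteq> D \<inter> comp_clause C"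
            using xC xN S_cx[OF D] cx by (force simp: comp_clause_def)
          show "D \<inter> comp_clause C \<subseteq> {Pos v}"
          proof
            fix l assume l: "l \<in> D \<inter> comp_clause C"
            then obtain c where c: "c \<in> C" "l = comp c" by (auto simp: comp_clause_def)
            show "l \<in> {Pos v}"
            proof (cases "c = x")
              case True then show ?thesis using c cx by simp
            next
              case False
              then have "c \<in> C'" using c by simp
              then have "comp c \<notin> D" using noclash[of D c] sub D by blast
              then show ?thesis using l c by simp
            qed
          qed
        qed
        have "Neg v \<notin> D" using S_x[OF D] xN by simp
        moreover have "Pos v \<notin> C" using C_notS cx by simp
        ultimately have "X = (D \<union> C) - {Pos v, Neg v}" using X xN cx sub D by auto
        then show "X \<in> ?R" using CF S_F[OF D] int by blast
      qed
    qed
  qed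
  have "{E \<in> F. v \<notin> var_clause E} = F0" by (simp add: F0_def)
  then show ?thesis unfolding DP_def using R by simp
qed


context
  assumes u: "\<not> satisfiable F" and w: "\<forall>E\<in>F. \<exists>\<phi>. wit F E \<phi>"
    and s: "\<forall>E\<in>F. \<forall>y. var_lit y \<in> var_cls F - var_clause E \<longrightarrow> (\<exists>\<phi>. wit F E \<phi> \<and> lit_true \<phi> y)"
begin

lemma get_wit: assumes "E \<in> F" obtains \<phi> where "wit F E \<phi>"
proof -
  have "\<exists>\<phi>. wit F E \<phi>" using w assms by blast
  then show ?thesis using that by (elim exE)
qed

lemma get_wit_y: assumes "E \<in> F" "var_lit y \<in> var_cls F" "var_lit y \<notin> var_clause E"
  obtains \<phi> where "wit F E \<phi>" "lit_true \<phi> y"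
proof -
  have "\<exists>\<phi>. wit F E \<phi> \<and> lit_true \<phi> y" using s assms by blast
  then obtain \<phi> where "wit F E \<phi> \<and> lit_true \<phi> y" by (elim exE)
  then show ?thesis using that by blast
qed

lemma get_wit_y2: assumes "E \<in> F" "y \<notin> E" "var_lit y \<in> var_cls F"
  obtains \<phi> where "wit F E \<phi>" "lit_true \<phi> y"
proof (cases "comp y \<in> E")
  case True
  obtain \<phi> where p: "wit F E \<phi>" using get_wit[OF assms(1)] .
  have "\<not> lit_true \<phi> (comp y)" using unsat_member[OF witD1[OF p] True] .
  then show ?thesis using that p by simp
next
  case False
  have "var_lit y \<notin> var_clause E"
  proof
    assume "var_lit y \<in> var_clause E"
    then obtain l where "l \<in> E" "var_lit y = var_lit l" by (rule var_clauseE) auto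
    then show False using var_eq[of l y] assms(2) False by auto
  qed
  then show ?thesis using get_wit_y[OF assms(1,3)] that by blast
qed

lemma A1: "S \<noteq> {}"
proof
  assume S: "S = {}"
  obtain \<phi> where p: "wit F C \<phi>" using get_wit[OF CF] .
  have "\<forall>E\<in>F. sat_cl (mk \<phi> x) E"
  proof (rule modelsI)
    fix E assume E: "E \<in> F0"
    then have "sat_cl \<phi> E" using witD2[OF p F0_F[OF E]] C_notF0 by blast
    then show "sat_cl (mk \<phi> x) E" using mk_F0[OF E vx] by simp
  next
    show "sat_cl (mk \<phi> x) C" using satC mkx_x by blast
  next
    fix D assume "D \<in> S" then show "sat_cl (mk \<phi> x) D" using S by simp
  qed
  then show False using models_unsat[OF u] by blast
qed

lemma A2: assumes D: "D \<in> S" shows "C' \<subseteq> Dp D"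
proof
  fix y assume y: "y \<in> C'"
  have yv: "var_lit y \<noteq> v" using C'_var[OF y] .
  show "y \<in> Dp D"
  proof (rule ccontr)
    assume "y \<notin> Dp D"
    then have "y \<notin> D" using y C_notS by auto
    moreover have "var_lit y \<in> var_cls F" using var_clsI[OF CF] y by blast
    ultimately obtain \<psi> where p: "wit F D \<psi>" "lit_true \<psi> y"
      using get_wit_y2[OF S_F[OF D]] by blast
    have vc: "var_lit (comp x) = v" using vx by simp
    have "\<forall>E\<in>F. sat_cl (mk \<psi> (comp x)) E"
    proof (rule modelsI)
      fix E assume E: "E \<in> F0"
      then have "E \<noteq> D" using S_notF0[OF D] by blast
      then have "sat_cl \<psi> E" using witD2[OF p(1) F0_F[OF E]] by blast
      then show "sat_cl (mk \<psi> (comp x)) E" using mk_F0[OF E vc] by simp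
    next
      have "lit_true (mk \<psi> (comp x)) y" using mk_lit[OF yv vc] p(2) by simp
      then show "sat_cl (mk \<psi> (comp x)) C" using sat_member[of y C] y by blast
    next
      fix D2 assume "D2 \<in> S"
      then show "sat_cl (mk \<psi> (comp x)) D2" using sat_member[OF S_cx] mk_true by blast
    qed
    then show False using models_unsat[OF u] by blast
  qed
qed

lemma A3: assumes z: "z \<in> (\<Inter>D\<in>S. Dp D)" shows "z \<in> C'"
proof (rule ccontr)
  assume nz: "z \<notin> C'"
  obtain D0 where D0: "D0 \<in> S" using A1 by blast
  have zD0: "z \<in> Dp D0" using z D0 by blast
  have zv: "var_lit z \<noteq> v" using Dp_var[OF D0 zD0] .
  have "z \<noteq> x" using zv vx by blast
  then have "z \<notin> C" using nz by blast
  moreover have "var_lit z \<in> var_cls F" using var_clsI[OF S_F[OF D0]] zD0 by blast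
  ultimately obtain \<phi> where p: "wit F C \<phi>" "lit_true \<phi> z"
    using get_wit_y2[OF CF] by blast
  have "\<forall>E\<in>F. sat_cl (mk \<phi> x) E"
  proof (rule modelsI)
    fix E assume E: "E \<in> F0"
    then have "sat_cl \<phi> E" using witD2[OF p(1) F0_F[OF E]] C_notF0 by blast
    then show "sat_cl (mk \<phi> x) E" using mk_F0[OF E vx] by simp
  next
    show "sat_cl (mk \<phi> x) C" using satC mkx_x by blast
  next
    fix D assume D: "D \<in> S"
    have "z \<in> D" using z D by blast
    moreover have "lit_true (mk \<phi> x) z" using mk_lit[OF zv vx] p(2) by simp
    ultimately show "sat_cl (mk \<phi> x) D" using sat_member by blast
  qed
  then show False using models_unsat[OF u] by blast
qed

lemma A4: assumes E: "E \<in> F0" shows "\<not> C' \<subseteq> E"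
proof
  assume sub: "C' \<subseteq> E"
  have "var_lit (comp x) \<in> var_cls F" using var_clsI[OF CF xC] by simp
  moreover have "var_lit (comp x) \<notin> var_clause E" using F0_v[OF E] vx by simp
  ultimately obtain \<psi> where p: "wit F E \<psi>" "lit_true \<psi> (comp x)"
    using get_wit_y[OF F0_F[OF E]] by blast
  have "\<not> sat_cl \<psi> C'" using witD1[OF p(1)] sat_mono[OF sub] by blast
  moreover have "\<not> lit_true \<psi> x" using p(2) by simp
  ultimately have "\<not> sat_cl \<psi> C" using satC by blast
  moreover have "C \<noteq> E" using C_notF0 E by blast
  ultimately show False using witD2[OF p(1) CF] by blast
qed

end


abbreviation G where "G \<equiv> F0 \<union> Dp ` S"

context assumes sub: "\<forall>D\<in>S. C' \<subseteq> Dp D"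
begin

lemma var_G: assumes "w \<in> var_cls G" shows "w \<in> var_cls F" "w \<noteq> v"
proof -
  obtain E l where E: "E \<in> G" "l \<in> E" "w = var_lit l" using assms by (rule var_clsE)
  have "w \<in> var_cls F \<and> w \<noteq> v"
  proof (cases "E \<in> F0")
    case True
    then show ?thesis using var_clsI[OF F0_F[OF True] E(2)] F0_v[OF True] var_clauseI[OF E(2)] E(3) by auto
  next
    case False
    then obtain D where D: "D \<in> S" "E = Dp D" using E(1) by blast
    then have "l \<in> D" using E(2) by blast
    then show ?thesis using var_clsI[OF S_F[OF D(1)]] Dp_var[OF D(1)] E D by blast
  qed
  then show "w \<in> var_cls F" "w \<noteq> v" by auto
qed

lemma var_F: assumes Sne: "S \<noteq> {}" and "w \<in> var_cls F" "w \<noteq> v" shows "w \<in> var_cls G"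
proof -
  obtain E l where E: "E \<in> F" "l \<in> E" "w = var_lit l" using assms(2) by (rule var_clsE)
  consider "E \<in> F0" | "E = C" | "E \<in> S" using split[OF E(1)] by blast
  then show ?thesis
  proof cases
    case 1 then show ?thesis using var_clsI[of E G l] E by blast
  next
    case 2
    obtain D where D: "D \<in> S" using Sne by blast
    have "l \<noteq> x" using E assms(3) vx by blast
    then have "l \<in> Dp D" using sub D E(2) 2 by blast
    then show ?thesis using var_clsI[of "Dp D" G l] D E(3) by blast
  next
    case 3
    have "l \<noteq> comp x" using E assms(3) vx by auto
    then have "l \<in> Dp E" using E(2) by blast
    then show ?thesis using var_clsI[of "Dp E" G l] 3 E(3) by blast
  qed
qed

lemma satDp_from: assumes D: "D \<in> S" "sat_cl \<phi> D" "sat_cl \<phi> C" shows "sat_cl \<phi> (Dp D)"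
proof (cases "lit_true \<phi> x")
  case True then show ?thesis using satD[OF D(1)] D(2) by blast
next
  case False
  then have "sat_cl \<phi> C'" using satC D(3) by blast
  then show ?thesis using sat_mono sub D(1) by blast
qed

lemma T1: assumes E: "E \<in> F0" and p: "wit F E \<phi>" shows "wit G E \<phi>"
proof (rule witI)
  show "\<not> sat_cl \<phi> E" using witD1[OF p] .
  fix E2 assume E2: "E2 \<in> G" "E2 \<noteq> E"
  show "sat_cl \<phi> E2"
  proof (cases "E2 \<in> F0")
    case True then show ?thesis using witD2[OF p F0_F[OF True] E2(2)] by simp
  next
    case False
    then obtain D where D: "D \<in> S" "E2 = Dp D" using E2(1) by blast
    have "sat_cl \<phi> D" using witD2[OF p S_F[OF D(1)]] S_notF0[OF D(1)] E by blast
    moreover have "sat_cl \<phi> C" using witD2[OF p CF] C_notF0 E by blast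
    ultimately show ?thesis using satDp_from D by blast
  qed
qed

lemma T2: assumes D: "D \<in> S" and p: "wit F D \<phi>" shows "wit G (Dp D) \<phi>"
proof (rule witI)
  have nD: "\<not> sat_cl \<phi> D" using witD1[OF p] .
  then show "\<not> sat_cl \<phi> (Dp D)" using sat_mono[of "Dp D" D] by blast
  have x: "lit_true \<phi> x" using nD satD[OF D] by blast
  fix E2 assume E2: "E2 \<in> G" "E2 \<noteq> Dp D"
  show "sat_cl \<phi> E2"
  proof (cases "E2 \<in> F0")
    case True then show ?thesis using witD2[OF p F0_F[OF True]] S_notF0[OF D] by blast
  next
    case False
    then obtain D2 where D2: "D2 \<in> S" "E2 = Dp D2" using E2(1) by blast
    then have "D2 \<noteq> D" using E2(2) by blast
    then have "sat_cl \<phi> D2" using witD2[OF p S_F[OF D2(1)]] by blast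
    then show ?thesis using satD[OF D2(1)] x D2(2) by blast
  qed
qed

lemma models_FG: assumes "\<forall>E\<in>F. sat_cl \<phi> E" shows "\<forall>E\<in>G. sat_cl \<phi> E"
proof
  fix E assume "E \<in> G"
  then consider "E \<in> F0" | D where "D \<in> S" "E = Dp D" by blast
  then show "sat_cl \<phi> E"
  proof cases
    case 1 then show ?thesis using assms F0_F by blast
  next
    case 2 then show ?thesis using satDp_from assms CF S_F by blast
  qed
qed

lemma models_GF: assumes p: "\<forall>E\<in>G. sat_cl \<psi> E" shows "\<forall>E\<in>F. sat_cl (mk \<psi> x) E"
proof (rule modelsI)
  fix E assume E: "E \<in> F0"
  then show "sat_cl (mk \<psi> x) E" using mk_F0[OF E vx] p by blast
next
  show "sat_cl (mk \<psi> x) C" using satC mkx_x by blast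
next
  fix D assume D: "D \<in> S"
  have "sat_cl \<psi> (Dp D)" using p D by blast
  then have "sat_cl (mk \<psi> x) (Dp D)" using mk_Dp[OF D vx] by simp
  then show "sat_cl (mk \<psi> x) D" using sat_mono[of "Dp D" D] by blast
qed

lemma L1: assumes E: "E \<in> F0" and p: "wit G E \<psi>" and ne: "\<forall>D\<in>S. Dp D \<noteq> E"
  and l: "var_lit l = v" and h: "lit_true (mk \<psi> l) x \<or> sat_cl \<psi> C'"
  shows "wit F E (mk \<psi> l)"
proof (rule witFI)
  show "E \<in> F" using F0_F[OF E] .
  show "\<not> sat_cl (mk \<psi> l) E" using witD1[OF p] mk_F0[OF E l] by simp
next
  fix E' assume "E' \<in> F0" "E' \<noteq> E"
  then show "sat_cl (mk \<psi> l) E'" using witD2[OF p] mk_F0[OF _ l] by blast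
next
  show "sat_cl (mk \<psi> l) C" using h satC mk_C'[OF l] by blast
next
  fix D assume D: "D \<in> S" "D \<noteq> E"
  have "sat_cl \<psi> (Dp D)" using witD2[OF p] D(1) ne by blast
  then have "sat_cl (mk \<psi> l) (Dp D)" using mk_Dp[OF D(1) l] by simp
  then show "sat_cl (mk \<psi> l) D" using sat_mono[of "Dp D" D] by blast
qed

lemma L2: assumes D: "D \<in> S" and p: "wit G (Dp D) \<psi>" and ne: "\<forall>E\<in>F0. E \<noteq> Dp D"
  shows "wit F D (mk \<psi> x)"
proof (rule witFI)
  show "D \<in> F" using S_F[OF D] .
  have "\<not> sat_cl (mk \<psi> x) (Dp D)" using witD1[OF p] mk_Dp[OF D vx] by simp
  then show "\<not> sat_cl (mk \<psi> x) D" using satD[OF D] mkx_x by blast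
next
  fix E' assume E': "E' \<in> F0" "E' \<noteq> D"
  then have "sat_cl \<psi> E'" using witD2[OF p] ne by blast
  then show "sat_cl (mk \<psi> x) E'" using mk_F0[OF E'(1) vx] by simp
next
  show "sat_cl (mk \<psi> x) C" using satC mkx_x by blast
next
  fix D2 assume D2: "D2 \<in> S" "D2 \<noteq> D"
  then have "Dp D2 \<noteq> Dp D" using Dp_inj D by blast
  then have "sat_cl \<psi> (Dp D2)" using witD2[OF p] D2(1) by blast
  then have "sat_cl (mk \<psi> x) (Dp D2)" using mk_Dp[OF D2(1) vx] by simp
  then show "sat_cl (mk \<psi> x) D2" using sat_mono[of "Dp D2" D2] by blast
qed

lemma L3: assumes D: "D \<in> S" and p: "wit G (Dp D) \<psi>" and ne: "\<forall>E\<in>F0. E \<noteq> Dp D"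
  shows "wit F C (mk \<psi> (comp x))"
proof (rule witFI)
  have vc: "var_lit (comp x) = v" using vx by simp
  show "C \<in> F" using CF .
  have "\<not> sat_cl \<psi> C'" using witD1[OF p] sat_mono sub D by blast
  then have "\<not> sat_cl (mk \<psi> (comp x)) C'" using mk_C'[OF vc] by simp
  then show "\<not> sat_cl (mk \<psi> (comp x)) C" using satC mkn_x by blast
next
  have vc: "var_lit (comp x) = v" using vx by simp
  fix E' assume E': "E' \<in> F0" "E' \<noteq> C"
  then have "sat_cl \<psi> E'" using witD2[OF p] ne by blast
  then show "sat_cl (mk \<psi> (comp x)) E'" using mk_F0[OF E'(1) vc] by simp
next
  fix D2 assume D2: "D2 \<in> S" "D2 \<noteq> C"
  then show "sat_cl (mk \<psi> (comp x)) D2" using sat_member[OF S_cx] mk_true by blast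
qed simp

end


lemma dirA: assumes smu: "saturated_min_unsat F"
  shows "saturated_min_unsat (DP v F) \<and> C' = (\<Inter>D\<in>S. Dp D) \<and> (\<forall>E\<in>F. v \<notin> var_clause E \<longrightarrow> \<not> C' \<subseteq> E)"
proof -
  have u: "\<not> satisfiable F" and w: "\<forall>E\<in>F. \<exists>\<phi>. wit F E \<phi>"
    and s: "\<forall>E\<in>F. \<forall>y. var_lit y \<in> var_cls F - var_clause E \<longrightarrow> (\<exists>\<phi>. wit F E \<phi> \<and> lit_true \<phi> y)"
    using smu unfolding SMU_char by blast+
  have sub: "\<forall>D\<in>S. C' \<subseteq> Dp D" using A2[OF u w s] by blast
  have DPe: "DP v F = G" using DP_eq[OF sub] .
  have gu: "\<not> satisfiable G"
  proof
    assume "satisfiable G"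
    then have "\<exists>\<psi>. \<forall>E\<in>G. sat_cl \<psi> E" by (simp only: satisfiable_alt)
    then obtain \<psi> where "\<forall>E\<in>G. sat_cl \<psi> E" by (elim exE)
    then have "\<forall>E\<in>F. sat_cl (mk \<psi> x) E" by (rule models_GF[OF sub])
    then show False by (rule models_unsat[OF u])
  qed
  have gs: "\<exists>\<phi>. wit G E \<phi> \<and> lit_true \<phi> y"
    if E: "E \<in> G" and y: "var_lit y \<in> var_cls G - var_clause E" for E y
  proof -
    have yF: "var_lit y \<in> var_cls F" and yv: "var_lit y \<noteq> v" using var_G[OF sub] y by auto
    show ?thesis
    proof (cases "E \<in> F0")
      case True
      have "var_lit y \<notin> var_clause E" using y by blast
      then obtain \<phi> where "wit F E \<phi>" "lit_true \<phi> y"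
        by (rule get_wit_y[OF u w s F0_F[OF True] yF])
      then have "wit G E \<phi> \<and> lit_true \<phi> y" using T1[OF sub True] by blast
      then show ?thesis by (rule exI[where x=\<phi>])
    next
      case False
      then obtain D where D: "D \<in> S" "E = Dp D" using E by blast
      have "var_lit y \<notin> var_clause D"
      proof
        assume "var_lit y \<in> var_clause D"
        then obtain l where l: "l \<in> D" "var_lit y = var_lit l" by (rule var_clauseE) auto
        then have "l \<noteq> comp x" using yv vx by auto
        then have "l \<in> E" using l D by blast
        then show False using var_clauseI[of l E] l y by simp
      qed
      then obtain \<phi> where "wit F D \<phi>" "lit_true \<phi> y"
        by (rule get_wit_y[OF u w s S_F[OF D(1)] yF])
      then have "wit G E \<phi> \<and> lit_true \<phi> y" using T2[OF sub D(1)] D(2) by blast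
      then show ?thesis by (rule exI[where x=\<phi>])
    qed
  qed
  have gw: "\<exists>\<phi>. wit G E \<phi>" if E: "E \<in> G" for E
  proof (cases "E \<in> F0")
    case True
    obtain \<phi> where "wit F E \<phi>" by (rule get_wit[OF u w s F0_F[OF True]])
    then have "wit G E \<phi>" by (rule T1[OF sub True])
    then show ?thesis by (rule exI[where x=\<phi>])
  next
    case False
    then obtain D where D: "D \<in> S" "E = Dp D" using E by blast
    obtain \<phi> where "wit F D \<phi>" by (rule get_wit[OF u w s S_F[OF D(1)]])
    then have "wit G E \<phi>" using T2[OF sub D(1)] D(2) by simp
    then show ?thesis by (rule exI[where x=\<phi>])
  qed
  have "saturated_min_unsat G" unfolding SMU_char using gu gw gs by blast
  moreover have "C' = (\<Inter>D\<in>S. Dp D)"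
  proof
    show "C' \<subseteq> (\<Inter>D\<in>S. Dp D)" using sub by blast
    show "(\<Inter>D\<in>S. Dp D) \<subseteq> C'" using A3[OF u w s] by blast
  qed
  moreover have "\<forall>E\<in>F. v \<notin> var_clause E \<longrightarrow> \<not> C' \<subseteq> E"
    using A4[OF u w s] unfolding F0_def by blast
  ultimately show ?thesis using DPe by simp
qed


lemma dirB: assumes smu: "saturated_min_unsat (DP v F)" and b: "C' = (\<Inter>D\<in>S. Dp D)"
  and c: "\<forall>E\<in>F. v \<notin> var_clause E \<longrightarrow> \<not> C' \<subseteq> E"
  shows "saturated_min_unsat F"
proof -
  have Sne: "S \<noteq> {}"
  proof
    assume "S = {}"
    then have "comp x \<in> C'" using b by simp
    then show False using C_notS by simp
  qed
  have sub: "\<forall>D\<in>S. C' \<subseteq> Dp D" using b by blast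
  have DPe: "DP v F = G" using DP_eq[OF sub] .
  have uG: "\<not> satisfiable G" and wG: "\<forall>E\<in>G. \<exists>\<phi>. wit G E \<phi>"
    and sG: "\<forall>E\<in>G. \<forall>y. var_lit y \<in> var_cls G - var_clause E \<longrightarrow> (\<exists>\<phi>. wit G E \<phi> \<and> lit_true \<phi> y)"
    using smu unfolding SMU_char DPe by blast+
  have ne1: "\<forall>E\<in>F0. \<forall>D\<in>S. E \<noteq> Dp D"
  proof (intro ballI)
    fix E D assume E: "E \<in> F0" and D: "D \<in> S"
    have "\<not> C' \<subseteq> E" using c F0_F[OF E] F0_v[OF E] by blast
    then show "E \<noteq> Dp D" using sub D by blast
  qed
  have uF: "\<not> satisfiable F"
  proof
    assume "satisfiable F"
    then have "\<exists>\<phi>. \<forall>E\<in>F. sat_cl \<phi> E" by (simp only: satisfiable_alt)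
    then obtain \<phi> where "\<forall>E\<in>F. sat_cl \<phi> E" by (elim exE)
    then have "\<forall>E\<in>G. sat_cl \<phi> E" by (rule models_FG[OF sub])
    then show False by (rule models_unsat[OF uG])
  qed
  have getG: "\<exists>\<psi>. wit G E \<psi>" if "E \<in> G" for E using wG that by blast
  have wF: "\<exists>\<phi>. wit F E \<phi> \<and> (var_lit y \<in> var_cls F - var_clause E \<longrightarrow> lit_true \<phi> y)"
    if E: "E \<in> F" for E y
  proof -
    consider "E \<in> F0" | "E = C" | "E \<in> S" using split[OF E] by blast
    then show ?thesis
    proof cases
      case 1
      have EG: "E \<in> G" using 1 by blast
      have ne: "\<forall>D\<in>S. Dp D \<noteq> E" using ne1 1 by blast
      show ?thesis
      proof (cases "var_lit y \<in> var_cls F - var_clause E")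
        case False
        obtain \<psi> where p: "wit G E \<psi>" using getG[OF EG] by (elim exE)
        have "wit F E (mk \<psi> x)" using L1[OF sub 1 p ne vx] by simp
        then have "wit F E (mk \<psi> x) \<and> (var_lit y \<in> var_cls F - var_clause E \<longrightarrow> lit_true (mk \<psi> x) y)" using False by blast
        then show ?thesis by (rule exI[where x="mk \<psi> x"])
      next
        case yE: True
        show ?thesis
        proof (cases "var_lit y = v")
          case True
          then consider "y = x" | "y = comp x" using var_v by blast
          then show ?thesis
          proof cases
            case 1
            obtain \<psi> where p: "wit G E \<psi>" using getG[OF EG] by (elim exE)
            have "wit F E (mk \<psi> x)" using L1[OF sub \<open>E \<in> F0\<close> p ne vx] by simp
            then have "wit F E (mk \<psi> x) \<and> (var_lit y \<in> var_cls F - var_clause E \<longrightarrow> lit_true (mk \<psi> x) y)" using 1 by simp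
            then show ?thesis by (rule exI[where x="mk \<psi> x"])
          next
            case 2
            have "\<not> C' \<subseteq> E" using c F0_F[OF \<open>E \<in> F0\<close>] F0_v[OF \<open>E \<in> F0\<close>] by blast
            then obtain c0 where c0: "c0 \<in> C'" "c0 \<notin> E" by (auto simp only: subset_iff)
            obtain D0 where D0: "D0 \<in> S" using Sne by blast
            have "c0 \<in> Dp D0" using sub D0 c0 by blast
            moreover have "Dp D0 \<in> G" using D0 by blast
            ultimately have vc0: "var_lit c0 \<in> var_cls G" using var_clsI[of "Dp D0" G c0] by blast
            obtain \<psi> where p: "wit G E \<psi>" "lit_true \<psi> c0"
              using gen_wit_y2[OF wG sG EG c0(2) vc0] by metis
            have "sat_cl \<psi> C'" by (rule sat_member[OF c0(1) p(2)])
            have vc: "var_lit (comp x) = v" using vx by simp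
            have "wit F E (mk \<psi> (comp x))"
              by (rule L1[OF sub \<open>E \<in> F0\<close> p(1) ne vc]) (use \<open>sat_cl \<psi> C'\<close> in blast)
            moreover have "lit_true (mk \<psi> (comp x)) y" using 2 mkn_x by simp
            ultimately have "wit F E (mk \<psi> (comp x)) \<and> (var_lit y \<in> var_cls F - var_clause E \<longrightarrow> lit_true (mk \<psi> (comp x)) y)" by blast
            then show ?thesis by (rule exI[where x="mk \<psi> (comp x)"])
          qed
        next
          case False
          have yG: "var_lit y \<in> var_cls G" using var_F[OF sub Sne] yE False by blast
          have "var_lit y \<in> var_cls G - var_clause E" using yG yE by blast
          then have "\<exists>\<psi>. wit G E \<psi> \<and> lit_true \<psi> y" using sG EG by blast
          then obtain \<psi> where "wit G E \<psi> \<and> lit_true \<psi> y" by (elim exE)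
          then have p: "wit G E \<psi>" "lit_true \<psi> y" by blast+
          have "wit F E (mk \<psi> x)" using L1[OF sub 1 p(1) ne vx] by simp
          moreover have "lit_true (mk \<psi> x) y" using mk_lit[OF False vx] p(2) by simp
          ultimately have "wit F E (mk \<psi> x) \<and> (var_lit y \<in> var_cls F - var_clause E \<longrightarrow> lit_true (mk \<psi> x) y)" by blast
          then show ?thesis by (rule exI[where x="mk \<psi> x"])
        qed
      qed
    next
      case 2
      have vc: "var_lit (comp x) = v" using vx by simp
      show ?thesis
      proof (cases "var_lit y \<in> var_cls F - var_clause E")
        case False
        obtain D0 where D0: "D0 \<in> S" using Sne by blast
        have DG: "Dp D0 \<in> G" using D0 by blast
        obtain \<psi> where p: "wit G (Dp D0) \<psi>" using getG[OF DG] by (elim exE)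
        have "wit F C (mk \<psi> (comp x))" using L3[OF sub D0 p] ne1 D0 by blast
        then have "wit F E (mk \<psi> (comp x)) \<and> (var_lit y \<in> var_cls F - var_clause E \<longrightarrow> lit_true (mk \<psi> (comp x)) y)" using False 2 by blast
        then show ?thesis by (rule exI[where x="mk \<psi> (comp x)"])
      next
        case yE: True
        have yv: "var_lit y \<noteq> v" using yE 2 var_clauseI[OF xC] vx by auto
        have "y \<notin> C" using yE 2 var_clauseI[of y C] by blast
        then have "y \<notin> C'" by blast
        then obtain D where D: "D \<in> S" "y \<notin> Dp D" using b by blast
        have DG: "Dp D \<in> G" using D by blast
        have yG: "var_lit y \<in> var_cls G" using var_F[OF sub Sne] yE yv by blast
        obtain \<psi> where p: "wit G (Dp D) \<psi>" "lit_true \<psi> y"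
          by (rule gen_wit_y2[OF wG sG DG D(2) yG])
        have "wit F C (mk \<psi> (comp x))" using L3[OF sub D(1) p(1)] ne1 D by blast
        moreover have "lit_true (mk \<psi> (comp x)) y" using mk_lit[OF yv vc] p(2) by simp
        ultimately have "wit F E (mk \<psi> (comp x)) \<and> (var_lit y \<in> var_cls F - var_clause E \<longrightarrow> lit_true (mk \<psi> (comp x)) y)" using 2 by blast
        then show ?thesis by (rule exI[where x="mk \<psi> (comp x)"])
      qed
    next
      case 3
      have DG: "Dp E \<in> G" using 3 by blast
      have ne: "\<forall>E'\<in>F0. E' \<noteq> Dp E" using ne1 3 by blast
      show ?thesis
      proof (cases "var_lit y \<in> var_cls F - var_clause E")
        case False
        obtain \<psi> where p: "wit G (Dp E) \<psi>" using getG[OF DG] by (elim exE)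
        have "wit F E (mk \<psi> x)" using L2[OF sub 3 p ne] by simp
        then have "wit F E (mk \<psi> x) \<and> (var_lit y \<in> var_cls F - var_clause E \<longrightarrow> lit_true (mk \<psi> x) y)" using False by blast
        then show ?thesis by (rule exI[where x="mk \<psi> x"])
      next
        case yE: True
        have yv: "var_lit y \<noteq> v" using yE var_clauseI[OF S_cx[OF 3]] vx by auto
        have yG: "var_lit y \<in> var_cls G" using var_F[OF sub Sne] yE yv by blast
        have "var_clause (Dp E) \<subseteq> var_clause E" unfolding var_clause_def by (rule image_mono) blast
        then have "var_lit y \<notin> var_clause (Dp E)" using yE by blast
        then have "var_lit y \<in> var_cls G - var_clause (Dp E)" using yG by blast
        then have "\<exists>\<psi>. wit G (Dp E) \<psi> \<and> lit_true \<psi> y" using sG DG by blast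
        then obtain \<psi> where "wit G (Dp E) \<psi> \<and> lit_true \<psi> y" by (elim exE)
        then have p: "wit G (Dp E) \<psi>" "lit_true \<psi> y" by blast+
        have "wit F E (mk \<psi> x)" using L2[OF sub 3 p(1) ne] by simp
        moreover have "lit_true (mk \<psi> x) y" using mk_lit[OF yv vx] p(2) by simp
        ultimately have "wit F E (mk \<psi> x) \<and> (var_lit y \<in> var_cls F - var_clause E \<longrightarrow> lit_true (mk \<psi> x) y)" by blast
        then show ?thesis by (rule exI[where x="mk \<psi> x"])
      qed
    qed
  qed
  have w: "\<forall>E\<in>F. \<exists>\<phi>. wit F E \<phi>"
  proof
    fix E assume EF: "E \<in> F"
    obtain \<phi> where "wit F E \<phi> \<and> (var_lit x \<in> var_cls F - var_clause E \<longrightarrow> lit_true \<phi> x)"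
      using wF[OF EF, of x] by (elim exE)
    then have "wit F E \<phi>" by blast
    then show "\<exists>\<phi>. wit F E \<phi>" by (rule exI[where x=\<phi>])
  qed
  have s: "\<forall>E\<in>F. \<forall>y. var_lit y \<in> var_cls F - var_clause E \<longrightarrow> (\<exists>\<phi>. wit F E \<phi> \<and> lit_true \<phi> y)"
  proof (intro ballI allI impI)
    fix E y assume E: "E \<in> F" and y: "var_lit y \<in> var_cls F - var_clause E"
    obtain \<phi> where "wit F E \<phi> \<and> (var_lit y \<in> var_cls F - var_clause E \<longrightarrow> lit_true \<phi> y)"
      using wF[OF E, of y] by (elim exE)
    then have "wit F E \<phi> \<and> lit_true \<phi> y" using y by blast
    then show "\<exists>\<phi>. wit F E \<phi> \<and> lit_true \<phi> y" by (rule exI[where x=\<phi>])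
  qed
  show ?thesis unfolding SMU_char using uF w s by blast
qed

end

theorem lemma12:
  fixes F :: "'v cls" and v :: 'v and x :: "'v lit" and C :: "'v clause"
  assumes "is_clause_set F"
    and "singular F v"
    and "var_lit x = v" and "ldeg F x = 1"
    and "C \<in> F" and "x \<in> C"
  shows "saturated_min_unsat F \<longleftrightarrow>
     (saturated_min_unsat (DP v F)
      \<and> C - {x} = (\<Inter>D\<in>{D \<in> F. comp x \<in> D}. D - {comp x})
      \<and> (\<forall>E\<in>F. v \<notin> var_clause E \<longrightarrow> \<not> C - {x} \<subseteq> E))"
proof -
  interpret sing F v x C using assms(1,3,4,5,6) by unfold_locales
  have Seq: "{D \<in> F. comp x \<in> D} = S" by (simp add: S_def)
  show ?thesis unfolding Seq using dirA dirB by blast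
qed

end
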